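(* Let $R$ be a ring, $M$ a left $R$-module and $P$ a strongly hollow submodule of $M$. Then either $P$ is a waist in $M$ (i.e. comparable under inclusion with every submodule of $M$), or there exist submodules $Q\subseteq M'$ of $M$ with $P\subseteq M'\subseteq M$ such that $P$ is the unique supplement of $Q$ in $M'$ and $M'/Q$ is hollow.
   Context: $P$ is strongly hollow in $M$ if for all submodules $K,L$ of $M$, $P\subseteq K+L$ implies $P\subseteq K$ or $P\subseteq L$. A supplement of $Q$ in $M'$ is a submodule $N\subseteq M'$ minimal with respect to $N+Q=M'$; it is the unique supplement if it is the only one. A module $N$ is hollow if $N=K+L$ for submodules $K,L$ implies $K=N$ or $L=N$. *)

theory Defs
  imports "HOL-Algebra.Module" "HOL-Algebra.AbelCoset"
begin

text \<open>Left modules over an arbitrary (not necessarily commutative) ring R.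
  The library locale module requires a commutative ring, so we define the
  general notion directly.\<close>

definition left_module :: "('a, 'c) ring_scheme \<Rightarrow> ('a, 'b, 'd) module_scheme \<Rightarrow> bool" where
  "left_module R M \<longleftrightarrow> ring R \<and> abelian_group M \<and>
     (\<forall>a\<in>carrier R. \<forall>x\<in>carrier M. a \<odot>\<^bsub>M\<^esub> x \<in> carrier M) \<and>
     (\<forall>a\<in>carrier R. \<forall>b\<in>carrier R. \<forall>x\<in>carrier M.
        (a \<oplus>\<^bsub>R\<^esub> b) \<odot>\<^bsub>M\<^esub> x = a \<odot>\<^bsub>M\<^esub> x \<oplus>\<^bsub>M\<^esub> b \<odot>\<^bsub>M\<^esub> x) \<and>
     (\<forall>a\<in>carrier R. \<forall>x\<in>carrier M. \<forall>y\<in>carrier M.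
        a \<odot>\<^bsub>M\<^esub> (x \<oplus>\<^bsub>M\<^esub> y) = a \<odot>\<^bsub>M\<^esub> x \<oplus>\<^bsub>M\<^esub> a \<odot>\<^bsub>M\<^esub> y) \<and>
     (\<forall>a\<in>carrier R. \<forall>b\<in>carrier R. \<forall>x\<in>carrier M.
        (a \<otimes>\<^bsub>R\<^esub> b) \<odot>\<^bsub>M\<^esub> x = a \<odot>\<^bsub>M\<^esub> (b \<odot>\<^bsub>M\<^esub> x)) \<and>
     (\<forall>x\<in>carrier M. \<one>\<^bsub>R\<^esub> \<odot>\<^bsub>M\<^esub> x = x)"

definition strongly_hollow_in ::
  "('a, 'c) ring_scheme \<Rightarrow> ('a, 'b, 'd) module_scheme \<Rightarrow> 'b set \<Rightarrow> bool" where
  "strongly_hollow_in R M P \<longleftrightarrow>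
     (\<forall>K L. submodule K R M \<longrightarrow> submodule L R M \<longrightarrow>
        P \<subseteq> K <+>\<^bsub>M\<^esub> L \<longrightarrow> P \<subseteq> K \<or> P \<subseteq> L)"

definition waist_in ::
  "('a, 'c) ring_scheme \<Rightarrow> ('a, 'b, 'd) module_scheme \<Rightarrow> 'b set \<Rightarrow> bool" where
  "waist_in R M P \<longleftrightarrow> (\<forall>N. submodule N R M \<longrightarrow> P \<subseteq> N \<or> N \<subseteq> P)"

text \<open>N is a supplement of Q in M' (M' a submodule of M; the submodules of M'
  are the submodules of M contained in M').\<close>
definition is_supplement ::
  "('a, 'c) ring_scheme \<Rightarrow> ('a, 'b, 'd) module_scheme \<Rightarrow> 'b set \<Rightarrow> 'b set \<Rightarrow> 'b set \<Rightarrow> bool" where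
  "is_supplement R M M' Q N \<longleftrightarrow>
     submodule N R M \<and> N \<subseteq> M' \<and> N <+>\<^bsub>M\<^esub> Q = M' \<and>
     (\<forall>N'. submodule N' R M \<longrightarrow> N' \<subseteq> N \<longrightarrow> N' <+>\<^bsub>M\<^esub> Q = M' \<longrightarrow> N' = N)"

definition unique_supplement ::
  "('a, 'c) ring_scheme \<Rightarrow> ('a, 'b, 'd) module_scheme \<Rightarrow> 'b set \<Rightarrow> 'b set \<Rightarrow> 'b set \<Rightarrow> bool" where
  "unique_supplement R M M' Q N \<longleftrightarrow>
     is_supplement R M M' Q N \<and> (\<forall>N'. is_supplement R M M' Q N' \<longrightarrow> N' = N)"

text \<open>Only the additive group and the scalar
  multiplication are relevant; the ring-multiplication fields are unused.\<close>
definition quotient_module ::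
  "('a, 'c) ring_scheme \<Rightarrow> ('a, 'b, 'd) module_scheme \<Rightarrow> 'b set \<Rightarrow> 'b set \<Rightarrow> ('a, 'b set) module" where
  "quotient_module R M M' Q =
     \<lparr> carrier = {Q +>\<^bsub>M\<^esub> x | x. x \<in> M'},
       monoid.mult = (\<lambda>A B. undefined), one = undefined,
       zero = Q,
       add = (\<lambda>A B. A <+>\<^bsub>M\<^esub> B),
       smult = (\<lambda>r A. Q <+>\<^bsub>M\<^esub> ((\<lambda>x. r \<odot>\<^bsub>M\<^esub> x) ` A)) \<rparr>"

definition hollow :: "('a, 'c) ring_scheme \<Rightarrow> ('a, 'b, 'd) module_scheme \<Rightarrow> bool" where
  "hollow R N \<longleftrightarrow>
     (\<forall>K L. submodule K R N \<longrightarrow> submodule L R N \<longrightarrow>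
        K <+>\<^bsub>N\<^esub> L = carrier N \<longrightarrow> K = carrier N \<or> L = carrier N)"

end

theory Submission imports Defs begin

lemma lm_ag: "left_module R M \<Longrightarrow> abelian_group M"
  unfolding left_module_def by auto
lemma lm_ring: "left_module R M \<Longrightarrow> ring R"
  unfolding left_module_def by auto

lemma lm_smult_closed: "left_module R M \<Longrightarrow> a \<in> carrier R \<Longrightarrow> x \<in> carrier M \<Longrightarrow> a \<odot>\<^bsub>M\<^esub> x \<in> carrier M"
  unfolding left_module_def by auto

lemma lm_neg:
  assumes lm: "left_module R M" and x: "x \<in> carrier M"
  shows "(\<ominus>\<^bsub>R\<^esub> \<one>\<^bsub>R\<^esub>) \<odot>\<^bsub>M\<^esub> x = \<ominus>\<^bsub>M\<^esub> x"
proof -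
  interpret M: abelian_group M using lm_ag[OF lm] .
  interpret R: ring R using lm_ring[OF lm] .
  have dist: "\<And>a b. a \<in> carrier R \<Longrightarrow> b \<in> carrier R \<Longrightarrow> (a \<oplus>\<^bsub>R\<^esub> b) \<odot>\<^bsub>M\<^esub> x = a \<odot>\<^bsub>M\<^esub> x \<oplus>\<^bsub>M\<^esub> b \<odot>\<^bsub>M\<^esub> x"
    using lm x unfolding left_module_def by auto
  have one: "\<one>\<^bsub>R\<^esub> \<odot>\<^bsub>M\<^esub> x = x" using lm x unfolding left_module_def by auto
  have z: "\<zero>\<^bsub>R\<^esub> \<odot>\<^bsub>M\<^esub> x \<in> carrier M" using lm_smult_closed[OF lm _ x] by simp
  have "\<zero>\<^bsub>R\<^esub> \<odot>\<^bsub>M\<^esub> x = \<zero>\<^bsub>R\<^esub> \<odot>\<^bsub>M\<^esub> x \<oplus>\<^bsub>M\<^esub> \<zero>\<^bsub>R\<^esub> \<odot>\<^bsub>M\<^esub> x"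
    using dist[of "\<zero>\<^bsub>R\<^esub>" "\<zero>\<^bsub>R\<^esub>"] by simp
  hence z0: "\<zero>\<^bsub>R\<^esub> \<odot>\<^bsub>M\<^esub> x = \<zero>\<^bsub>M\<^esub>"
    by (metis M.l_zero M.zero_closed M.add.right_cancel z)
  have n: "(\<ominus>\<^bsub>R\<^esub> \<one>\<^bsub>R\<^esub>) \<odot>\<^bsub>M\<^esub> x \<in> carrier M" using lm_smult_closed[OF lm _ x] by simp
  have "x \<oplus>\<^bsub>M\<^esub> (\<ominus>\<^bsub>R\<^esub> \<one>\<^bsub>R\<^esub>) \<odot>\<^bsub>M\<^esub> x = \<zero>\<^bsub>M\<^esub>"
    using dist[of "\<one>\<^bsub>R\<^esub>" "\<ominus>\<^bsub>R\<^esub> \<one>\<^bsub>R\<^esub>"] one z0 by (simp add: R.r_neg)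
  thus ?thesis using n x
    by (metis M.add.m_comm M.minus_equality)
qed

lemma sm_facts:
  assumes "submodule H R M"
  shows "H \<subseteq> carrier M" "\<zero>\<^bsub>M\<^esub> \<in> H"
    "\<And>a b. a \<in> H \<Longrightarrow> b \<in> H \<Longrightarrow> a \<oplus>\<^bsub>M\<^esub> b \<in> H"
    "\<And>r x. r \<in> carrier R \<Longrightarrow> x \<in> H \<Longrightarrow> r \<odot>\<^bsub>M\<^esub> x \<in> H"
  using subgroup.subset[OF submodule.axioms(1)[OF assms]]
    subgroup.one_closed[OF submodule.axioms(1)[OF assms]]
    subgroup.m_closed[OF submodule.axioms(1)[OF assms]]
    submodule.smult_closed[OF assms] by auto

lemma sm_neg:
  assumes lm: "left_module R M" and "submodule H R M" "x \<in> H"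
  shows "\<ominus>\<^bsub>M\<^esub> x \<in> H"
proof -
  interpret R: ring R using lm_ring[OF lm] .
  show ?thesis using sm_facts[OF assms(2)] lm_neg[OF lm, of x] assms(3) by (metis R.a_inv_closed R.one_closed subsetD)
qed

lemma sm_intro:
  assumes lm: "left_module R M" and "H \<subseteq> carrier M" "\<zero>\<^bsub>M\<^esub> \<in> H"
    "\<And>a b. a \<in> H \<Longrightarrow> b \<in> H \<Longrightarrow> a \<oplus>\<^bsub>M\<^esub> b \<in> H"
    "\<And>r x. r \<in> carrier R \<Longrightarrow> x \<in> H \<Longrightarrow> r \<odot>\<^bsub>M\<^esub> x \<in> H"
  shows "submodule H R M"
proof -
  interpret M: abelian_group M using lm_ag[OF lm] .
  interpret R: ring R using lm_ring[OF lm] .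
  have "\<And>x. x \<in> H \<Longrightarrow> inv\<^bsub>add_monoid M\<^esub> x \<in> H"
    using assms(5)[of "\<ominus>\<^bsub>R\<^esub> \<one>\<^bsub>R\<^esub>"] lm_neg[OF lm] assms(2)
    by (metis R.a_inv_closed R.one_closed subsetD a_inv_def)
  thus ?thesis
    by (intro submodule.intro subgroup.intro) (auto simp: submodule_axioms_def assms)
qed

lemma sum_sm:
  assumes lm: "left_module R M" and A: "submodule A R M" and B: "submodule B R M"
  shows "submodule (A <+>\<^bsub>M\<^esub> B) R M"
proof -
  interpret M: abelian_group M using lm_ag[OF lm] .
  note a = sm_facts[OF A] and b = sm_facts[OF B]
  have mem: "y \<in> A <+>\<^bsub>M\<^esub> B \<longleftrightarrow> (\<exists>x\<in>A. \<exists>z\<in>B. y = x \<oplus>\<^bsub>M\<^esub> z)" for y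
    unfolding set_add_def' by auto
  show ?thesis
  proof (rule sm_intro[OF lm])
    show "A <+>\<^bsub>M\<^esub> B \<subseteq> carrier M" using a(1) b(1) mem by (auto intro!: M.add.m_closed)
    show "\<zero>\<^bsub>M\<^esub> \<in> A <+>\<^bsub>M\<^esub> B" using a(2) b(2) mem by force
    show "x \<oplus>\<^bsub>M\<^esub> y \<in> A <+>\<^bsub>M\<^esub> B" if xy: "x \<in> A <+>\<^bsub>M\<^esub> B" "y \<in> A <+>\<^bsub>M\<^esub> B" for x y
    proof -
      obtain x1 x2 y1 y2 where "x1\<in>A" "x2\<in>B" "y1\<in>A" "y2\<in>B" "x = x1 \<oplus>\<^bsub>M\<^esub> x2" "y = y1 \<oplus>\<^bsub>M\<^esub> y2"
        using xy mem by meson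
      moreover have "x1 \<oplus>\<^bsub>M\<^esub> x2 \<oplus>\<^bsub>M\<^esub> (y1 \<oplus>\<^bsub>M\<^esub> y2) = (x1 \<oplus>\<^bsub>M\<^esub> y1) \<oplus>\<^bsub>M\<^esub> (x2 \<oplus>\<^bsub>M\<^esub> y2)"
        using calculation a(1) b(1) by (simp add: subset_iff M.a_ac) 
      ultimately show ?thesis using a(3) b(3) mem by metis
    qed
    show "r \<odot>\<^bsub>M\<^esub> x \<in> A <+>\<^bsub>M\<^esub> B" if rx: "r \<in> carrier R" "x \<in> A <+>\<^bsub>M\<^esub> B" for r x
    proof -
      obtain x1 x2 where "x1\<in>A" "x2\<in>B" "x = x1 \<oplus>\<^bsub>M\<^esub> x2" using rx mem by meson
      moreover have "r \<odot>\<^bsub>M\<^esub> (x1 \<oplus>\<^bsub>M\<^esub> x2) = r \<odot>\<^bsub>M\<^esub> x1 \<oplus>\<^bsub>M\<^esub> r \<odot>\<^bsub>M\<^esub> x2"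
        using lm calculation a(1) b(1) rx(1) unfolding left_module_def by blast
      ultimately show ?thesis using a(4) b(4) rx(1) mem by metis
    qed
  qed
qed


lemma quot_simps:
  "carrier (quotient_module R M M' Q) = {Q +>\<^bsub>M\<^esub> x | x. x \<in> M'}"
  "\<zero>\<^bsub>quotient_module R M M' Q\<^esub> = Q"
  "A \<oplus>\<^bsub>quotient_module R M M' Q\<^esub> B = A <+>\<^bsub>M\<^esub> B"
  "r \<odot>\<^bsub>quotient_module R M M' Q\<^esub> A = Q <+>\<^bsub>M\<^esub> ((\<lambda>x. r \<odot>\<^bsub>M\<^esub> x) ` A)"
  unfolding quotient_module_def by simp_all

lemma union_sm:
  assumes lm: "left_module R M" and N: "submodule N R M" and M': "M' \<subseteq> carrier M"
    and K: "submodule K R (quotient_module R M M' N)"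
  shows "submodule (\<Union>K) R M"
proof -
  interpret M: abelian_group M using lm_ag[OF lm] .
  note k = sm_facts[OF K, unfolded quot_simps]
  note n = sm_facts[OF N]
  have cos: "A \<in> K \<Longrightarrow> \<exists>a\<in>M'. A = N +>\<^bsub>M\<^esub> a" for A using k(1) by blast
  have sub: "\<Union>K \<subseteq> carrier M"
  proof
    fix x assume "x \<in> \<Union>K"
    then obtain A where "A \<in> K" "x \<in> A" by blast
    then obtain a where "a \<in> M'" "A = N +>\<^bsub>M\<^esub> a" using cos by blast
    then show "x \<in> carrier M" using \<open>x \<in> A\<close> M' n(1) unfolding a_r_coset_def' by (auto intro!: M.add.m_closed)
  qed
  show ?thesis
  proof (rule sm_intro[OF lm sub])
    show "\<zero>\<^bsub>M\<^esub> \<in> \<Union>K" using k(2) n(2) by blast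
    show "a \<oplus>\<^bsub>M\<^esub> b \<in> \<Union>K" if ab: "a \<in> \<Union>K" "b \<in> \<Union>K" for a b
    proof -
      obtain A B where "A \<in> K" "a \<in> A" "B \<in> K" "b \<in> B" using ab by blast
      then have "A <+>\<^bsub>M\<^esub> B \<in> K" "a \<oplus>\<^bsub>M\<^esub> b \<in> A <+>\<^bsub>M\<^esub> B" using k(3) unfolding set_add_def' by auto
      then show ?thesis by blast
    qed
    show "r \<odot>\<^bsub>M\<^esub> x \<in> \<Union>K" if rx: "r \<in> carrier R" "x \<in> \<Union>K" for r x
    proof -
      obtain A where A: "A \<in> K" "x \<in> A" using rx by blast
      have xc: "x \<in> carrier M" using sub rx by blast
      have "r \<odot>\<^bsub>M\<^esub> x \<in> carrier M" using lm_smult_closed[OF lm rx(1) xc] .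
      then have "\<zero>\<^bsub>M\<^esub> \<oplus>\<^bsub>M\<^esub> (r \<odot>\<^bsub>M\<^esub> x) \<in> N <+>\<^bsub>M\<^esub> ((\<lambda>x. r \<odot>\<^bsub>M\<^esub> x) ` A)"
        using n(2) A unfolding set_add_def' by blast
      moreover have "N <+>\<^bsub>M\<^esub> ((\<lambda>x. r \<odot>\<^bsub>M\<^esub> x) ` A) \<in> K" using k(4) rx(1) A(1) by blast
      ultimately show ?thesis using \<open>r \<odot>\<^bsub>M\<^esub> x \<in> carrier M\<close> by auto
    qed
  qed
qed

lemma full_quot:
  assumes lm: "left_module R M" and N: "submodule N R M" and P: "submodule P R M"
    and M': "M' = P <+>\<^bsub>M\<^esub> N"
    and K: "submodule K R (quotient_module R M M' N)" and PK: "P \<subseteq> \<Union>K"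
  shows "K = carrier (quotient_module R M M' N)"
proof -
  interpret M: abelian_group M using lm_ag[OF lm] .
  note k = sm_facts[OF K, unfolded quot_simps]
  note n = sm_facts[OF N] and p = sm_facts[OF P]
  have sg: "subgroup N (add_monoid M)" using submodule.axioms(1)[OF N] .
  have "N +>\<^bsub>M\<^esub> m \<in> K" if m: "m \<in> M'" for m
  proof -
    obtain q n' where qn: "q \<in> P" "n' \<in> N" "m = q \<oplus>\<^bsub>M\<^esub> n'" using m M' unfolding set_add_def' by blast
    obtain A where A: "A \<in> K" "q \<in> A" using PK qn(1) by blast
    then obtain a where a: "a \<in> M'" "A = N +>\<^bsub>M\<^esub> a" using k(1) by blast
    have ac: "a \<in> carrier M" using a(1) M' p(1) n(1) unfolding set_add_def' by (auto intro!: M.add.m_closed)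
    have qc: "q \<in> carrier M" "n' \<in> carrier M" using qn p(1) n(1) by auto
    have "N +>\<^bsub>M\<^esub> a = N +>\<^bsub>M\<^esub> q" using M.a_repr_independence[OF _ ac sg] A a by simp
    moreover have "m \<in> N +>\<^bsub>M\<^esub> q" using qn qc unfolding a_r_coset_def' by (auto simp: M.a_comm)
    then have "N +>\<^bsub>M\<^esub> q = N +>\<^bsub>M\<^esub> m" using M.a_repr_independence[OF _ qc(1) sg] by simp
    ultimately show ?thesis using A a by simp
  qed
  then show ?thesis using k(1) unfolding quot_simps by blast
qed

theorem proposition2p9:
  fixes R :: "('a, 'c) ring_scheme" and M :: "('a, 'b, 'd) module_scheme" and P :: "'b set"
  assumes "left_module R M"
    and "submodule P R M"
    and "strongly_hollow_in R M P"
  shows "waist_in R M P \<or>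
    (\<exists>Q M'. submodule Q R M \<and> submodule M' R M \<and> Q \<subseteq> M' \<and> P \<subseteq> M' \<and>
        unique_supplement R M M' Q P \<and> hollow R (quotient_module R M M' Q))"
proof (cases "waist_in R M P")
  case True then show ?thesis by simp
next
  case False
  note lm = assms(1) and P = assms(2)
  interpret M: abelian_group M using lm_ag[OF lm] .
  obtain N where N: "submodule N R M" "\<not> P \<subseteq> N" using False unfolding waist_in_def by blast
  note n = sm_facts[OF N(1)] and p = sm_facts[OF P]
  define M' where "M' = P <+>\<^bsub>M\<^esub> N"
  have SH: "\<And>K L. submodule K R M \<Longrightarrow> submodule L R M \<Longrightarrow> P \<subseteq> K <+>\<^bsub>M\<^esub> L \<Longrightarrow> P \<subseteq> K \<or> P \<subseteq> L"
    using assms(3) unfolding strongly_hollow_in_def by blast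
  have M'sm: "submodule M' R M" unfolding M'_def using sum_sm[OF lm P N(1)] .
  have NM': "N \<subseteq> M'"
  proof
    fix x assume "x \<in> N"
    then have "\<zero>\<^bsub>M\<^esub> \<oplus>\<^bsub>M\<^esub> x \<in> M'" using p(2) unfolding M'_def set_add_def' by blast
    then show "x \<in> M'" using \<open>x \<in> N\<close> n(1) by auto
  qed
  have PM': "P \<subseteq> M'"
  proof
    fix x assume "x \<in> P"
    then have "x \<oplus>\<^bsub>M\<^esub> \<zero>\<^bsub>M\<^esub> \<in> M'" using n(2) unfolding M'_def set_add_def' by blast
    then show "x \<in> M'" using \<open>x \<in> P\<close> p(1) by auto
  qed
  have supp: "is_supplement R M M' N P"
    unfolding is_supplement_def
  proof (intro conjI allI impI)
    show "submodule P R M" by (rule P)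
    show "P \<subseteq> M'" by (rule PM')
    show "P <+>\<^bsub>M\<^esub> N = M'" by (simp add: M'_def)
    fix N' assume "submodule N' R M" "N' \<subseteq> P" "N' <+>\<^bsub>M\<^esub> N = M'"
    then show "N' = P" using SH[of N' N] N PM' by auto
  qed
  have uniq: "unique_supplement R M M' N P"
    unfolding unique_supplement_def
  proof (intro conjI allI impI supp)
    fix N'' assume s: "is_supplement R M M' N N''"
    then have "P \<subseteq> N''" using SH[of N'' N] N PM' unfolding is_supplement_def by auto
    then show "N'' = P" using s P unfolding is_supplement_def M'_def by auto
  qed
  have hol: "hollow R (quotient_module R M M' N)"
    unfolding hollow_def
  proof (intro allI impI)
    fix K L
    assume K: "submodule K R (quotient_module R M M' N)" and L: "submodule L R (quotient_module R M M' N)"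
      and KL: "K <+>\<^bsub>quotient_module R M M' N\<^esub> L = carrier (quotient_module R M M' N)"
    have M'c: "M' \<subseteq> carrier M" using sm_facts[OF M'sm] by blast
    have PKL: "P \<subseteq> \<Union>K <+>\<^bsub>M\<^esub> \<Union>L"
    proof
      fix x assume x: "x \<in> P"
      then have "N +>\<^bsub>M\<^esub> x \<in> carrier (quotient_module R M M' N)" using PM' unfolding quot_simps by blast
      then have "N +>\<^bsub>M\<^esub> x \<in> K <+>\<^bsub>quotient_module R M M' N\<^esub> L" using KL by simp
      then obtain A B where AB0: "A \<in> K" "B \<in> L" "N +>\<^bsub>M\<^esub> x = A \<oplus>\<^bsub>quotient_module R M M' N\<^esub> B"
        unfolding set_add_def' by blast
      then have AB: "A \<in> K" "B \<in> L" "N +>\<^bsub>M\<^esub> x = A <+>\<^bsub>M\<^esub> B" unfolding quot_simps by simp_all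
      have "x \<in> N +>\<^bsub>M\<^esub> x" using n(2) x p(1) unfolding a_r_coset_def' by force
      then obtain a b where "a \<in> A" "b \<in> B" "x = a \<oplus>\<^bsub>M\<^esub> b" using AB(3) unfolding set_add_def' by blast
      then show "x \<in> \<Union>K <+>\<^bsub>M\<^esub> \<Union>L" using AB unfolding set_add_def' by blast
    qed
    from SH[OF union_sm[OF lm N(1) M'c K] union_sm[OF lm N(1) M'c L] PKL]
    show "K = carrier (quotient_module R M M' N) \<or> L = carrier (quotient_module R M M' N)"
      using full_quot[OF lm N(1) P M'_def K] full_quot[OF lm N(1) P M'_def L] by blast
  qed
  have "submodule N R M \<and> submodule M' R M \<and> N \<subseteq> M' \<and> P \<subseteq> M' \<and>
        unique_supplement R M M' N P \<and> hollow R (quotient_module R M M' N)"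
    using N(1) M'sm NM' PM' uniq hol by (intro conjI)
  then show ?thesis by (intro disjI2 exI)
qed

end
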